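(* Let $\bar f=(f_1,\dots,f_n)$, $\bar b=(b_1,\dots,b_m)$ be frame sequences with a distance $d$ satisfying the triangle inequality, such that $d(f_i,f_{i+1})\le\delta$ for $1\le i<n$, $d(b_j,b_{j+1})\le\delta$ for $1\le j<m$, and for every $i$ there is $j$ with $d(f_i,b_j)\le\epsilon$. Suppose $k=\epsilon/\delta$ is an integer with $1\le k\le\min\{n,m\}$. Then Algorithm Near-Linear($k$) returns a matching $\pi$ with cost $C(\pi)=O(\epsilon)$, and runs $k^2$ times faster than the naive $\Theta(mn)$ algorithm, i.e. in time $O(\frac{nm}{k^2})=O(\frac{nm\delta^2}{\epsilon^2})$.
   Context: For $\pi:\{1,\dots,n\}\to\{1,\dots,m\}$, $C(\pi)=\frac1n\sum_{i=1}^n d(f_i,b_{\pi(i)})$. The naive algorithm computes $d(f_i,b_j)$ for all pairs and picks, for each $i$, the minimizing $j$. Algorithm Near-Linear($k$): let $S_i^k=\{i:1\le i\le n,\ i\equiv 0 \bmod k\}\cup\{1\}\cup\{n\}$ and $S_j^k=\{j:1\le j\le m,\ j\equiv0\bmod k\}\cup\{1\}\cup\{m\}$; for $i\in S_i^k$ set $\pi(i)=\arg\min_{j\in S_j^k} d(f_i,b_j)$; for $i\notin S_i^k$ let $near(i)=\arg\min_{t\in S_i^k}|t-i|$ and set $\pi(i)=\pi(near(i))$. Running time counts each evaluation of $d$ as one step. *)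

theory Defs
  imports Complex_Main
begin

definition sample_set :: "nat \<Rightarrow> nat \<Rightarrow> nat set" where
  "sample_set k N = {i. 1 \<le> i \<and> i \<le> N \<and> i mod k = 0} \<union> {1} \<union> {N}"

definition match_cost ::
  "('a \<Rightarrow> 'a \<Rightarrow> real) \<Rightarrow> (nat \<Rightarrow> 'a) \<Rightarrow> (nat \<Rightarrow> 'a) \<Rightarrow> nat \<Rightarrow> (nat \<Rightarrow> nat) \<Rightarrow> real" where
  "match_cost d f b n \<pi> = (1 / real n) * (\<Sum>i = 1..n. d (f i) (b (\<pi> i)))"

text \<open>pi is a possible output of Near-Linear(k) (any tie-breaking in the arg-mins):
  for sampled i, pi(i) is a minimiser of d(f_i, b_j) over sampled j;
  for other i, pi(i) = pi(near(i)) where near(i) is a closest sampled index.\<close>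
definition near_linear_output ::
  "nat \<Rightarrow> ('a \<Rightarrow> 'a \<Rightarrow> real) \<Rightarrow> (nat \<Rightarrow> 'a) \<Rightarrow> nat \<Rightarrow> (nat \<Rightarrow> 'a) \<Rightarrow> nat \<Rightarrow> (nat \<Rightarrow> nat) \<Rightarrow> bool" where
  "near_linear_output k d f n b m \<pi> \<longleftrightarrow>
     (\<forall>i \<in> sample_set k n.
        \<pi> i \<in> sample_set k m \<and> (\<forall>j \<in> sample_set k m. d (f i) (b (\<pi> i)) \<le> d (f i) (b j))) \<and>
     (\<forall>i \<in> {1..n} - sample_set k n.
        (\<exists>t \<in> sample_set k n.
           (\<forall>t' \<in> sample_set k n. \<bar>int t - int i\<bar> \<le> \<bar>int t' - int i\<bar>) \<and> \<pi> i = \<pi> t))"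

text \<open>Running time of Near-Linear(k): number of evaluations of d, namely one per pair
  (i, j) with i in S_i^k and j in S_j^k.\<close>
definition near_linear_evals :: "nat \<Rightarrow> nat \<Rightarrow> nat \<Rightarrow> nat" where
  "near_linear_evals k n m = card (sample_set k n) * card (sample_set k m)"

end

theory Submission
  imports Defs
begin

lemma near_sample:
  assumes "1 \<le> k" "1 \<le> j" "j \<le> N"
  shows "\<exists>s\<in>sample_set k N. s \<le> j \<and> j - s < k"
proof (cases "j div k = 0")
  case True
  then have "j < k" using assms by (simp add: div_eq_0_iff)
  then show ?thesis using assms by (intro bexI[of _ 1]) (auto simp: sample_set_def)
next
  case False
  define s where "s = j div k * k"
  have "s mod k = 0" by (simp add: s_def)
  moreover have "s \<ge> k" using False by (simp add: s_def)
  moreover have "s \<le> j" by (simp add: s_def)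
  moreover have "j - s < k" using assms by (simp add: s_def minus_div_mult_eq_mod)
  ultimately show ?thesis using assms by (intro bexI[of _ s]) (auto simp: sample_set_def)
qed

lemma chain:
  assumes st: "\<forall>i. 1 \<le> i \<and> i < n \<longrightarrow> d (g i) (g (i + 1)) \<le> (\<delta>::real)"
    and tri: "\<forall>x y z. d x z \<le> d x y + d y z"
    and "1 \<le> a" "a < b" "b \<le> n"
  shows "d (g a) (g b) \<le> real (b - a) * \<delta>"
  using assms(4,5)
proof (induction b)
  case 0 then show ?case by simp
next
  case (Suc b)
  show ?case
  proof (cases "a = b")
    case True then show ?thesis using st Suc.prems assms(3) by auto
  next
    case False
    then have ab: "a < b" using Suc.prems by simp
    have "d (g a) (g (Suc b)) \<le> d (g a) (g b) + d (g b) (g (b+1))" using tri by simp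
    also have "\<dots> \<le> real (b - a) * \<delta> + \<delta>"
      using Suc.IH[OF ab] Suc.prems st ab assms(3) by (intro add_mono) auto
    also have "\<dots> = real (Suc b - a) * \<delta>" using ab by (simp add: of_nat_diff algebra_simps)
    finally show ?thesis .
  qed
qed

lemma card_sample:
  assumes "1 \<le> k" "k \<le> N"
  shows "real (card (sample_set k N)) \<le> 3 * real N / real k"
proof -
  have sub: "sample_set k N \<subseteq> (\<lambda>q. q * k) ` {1..N div k} \<union> {1, N}"
  proof
    fix x assume x: "x \<in> sample_set k N"
    show "x \<in> (\<lambda>q. q * k) ` {1..N div k} \<union> {1, N}"
    proof (cases "x = 1 \<or> x = N")
      case True then show ?thesis by auto
    next
      case False
      then have "1 \<le> x" "x \<le> N" "x mod k = 0" using x by (auto simp: sample_set_def)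
      then have "x = x div k * k" "1 \<le> x div k" "x div k \<le> N div k"
        using assms by (auto simp: div_le_mono)
      then show ?thesis by (auto intro: image_eqI)
    qed
  qed
  have "card (sample_set k N) \<le> card ((\<lambda>q. q * k) ` {1..N div k} \<union> {1, N})"
    by (rule card_mono[OF _ sub]) auto
  also have "\<dots> \<le> card ((\<lambda>q. q * k) ` {1..N div k}) + card {1, N}" by (rule card_Un_le)
  also have "\<dots> \<le> N div k + 2"
  proof -
    have "card {1, N} \<le> 2" by (simp add: card_insert_if)
    then show ?thesis using card_image_le[of "{1..N div k}" "\<lambda>q. q * k"] by simp
  qed
  finally have c: "real (card (sample_set k N)) \<le> real (N div k) + 2" by linarith
  have "real (N div k) \<le> real N / real k" by (rule of_nat_div_le_of_nat)
  moreover have "2 \<le> 2 * real N / real k" using assms by (simp add: field_simps)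
  moreover have "3 * real N / real k = real N / real k + 2 * real N / real k" by (simp add: field_simps)
  ultimately show ?thesis using c by linarith
qed

lemma main:
  fixes d :: "'a \<Rightarrow> 'a \<Rightarrow> real"
  assumes nn: "\<forall>x y. 0 \<le> d x y" and sym: "\<forall>x y. d x y = d y x"
    and tri: "\<forall>x y z. d x z \<le> d x y + d y z"
    and dp: "0 < \<delta>"
    and sf: "\<forall>i. 1 \<le> i \<and> i < n \<longrightarrow> d (f i) (f (i + 1)) \<le> \<delta>"
    and sb: "\<forall>j. 1 \<le> j \<and> j < m \<longrightarrow> d (b j) (b (j + 1)) \<le> \<delta>"
    and cl: "\<forall>i \<in> {1..n}. \<exists>j \<in> {1..m}. d (f i) (b j) \<le> \<epsilon>"
    and ke: "real k = \<epsilon> / \<delta>" and k1: "1 \<le> k" and kmin: "k \<le> min n m"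
    and nl: "near_linear_output k d f n b m \<pi>"
  shows "match_cost d f b n \<pi> \<le> 9 * \<epsilon> \<and>
       real (near_linear_evals k n m) \<le> 9 * (real n * real m / (real k)^2) \<and>
       real (near_linear_evals k n m) \<le> 9 * (real n * real m * \<delta>^2 / \<epsilon>^2)"
proof -
  have eps: "\<epsilon> = real k * \<delta>" using ke dp by (simp add: field_simps)
  have epos: "\<epsilon> > 0" using eps dp k1 by simp
  have kn: "k \<le> n" and km: "k \<le> m" using kmin by auto
  have samp: "\<And>i. i \<in> sample_set k n \<Longrightarrow> d (f i) (b (\<pi> i)) \<le> 2 * \<epsilon>"
  proof -
    fix i assume i: "i \<in> sample_set k n"
    have iin: "i \<in> {1..n}" using i kn k1 by (auto simp: sample_set_def)
    obtain j where j: "j \<in> {1..m}" "d (f i) (b j) \<le> \<epsilon>" using cl iin by blast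
    obtain s where s: "s \<in> sample_set k m" "s \<le> j" "j - s < k"
      using near_sample[OF k1, of j m] j by auto
    have s1: "1 \<le> s" using s km k1 by (auto simp: sample_set_def)
    have "d (f i) (b (\<pi> i)) \<le> d (f i) (b s)" using nl i s by (auto simp: near_linear_output_def)
    also have "\<dots> \<le> 2 * \<epsilon>"
    proof (cases "s = j")
      case True then show ?thesis using j epos by simp
    next
      case False
      then have "s < j" using s by simp
      then have "d (b s) (b j) \<le> real (j - s) * \<delta>" using chain[OF sb tri s1] j by auto
      also have "\<dots> \<le> real k * \<delta>" using s dp by (intro mult_right_mono) auto
      finally have "d (b j) (b s) \<le> \<epsilon>" using sym eps by metis
      moreover have "d (f i) (b s) \<le> d (f i) (b j) + d (b j) (b s)" using tri by blast
      ultimately show ?thesis using j by simp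
    qed
    finally show "d (f i) (b (\<pi> i)) \<le> 2 * \<epsilon>" .
  qed
  have each: "\<And>i. i \<in> {1..n} \<Longrightarrow> d (f i) (b (\<pi> i)) \<le> 3 * \<epsilon>"
  proof -
    fix i assume iin: "i \<in> {1..n}"
    show "d (f i) (b (\<pi> i)) \<le> 3 * \<epsilon>"
    proof (cases "i \<in> sample_set k n")
      case True then show ?thesis using samp epos by force
    next
      case False
      obtain t where t: "t \<in> sample_set k n"
        "\<forall>t' \<in> sample_set k n. \<bar>int t - int i\<bar> \<le> \<bar>int t' - int i\<bar>" "\<pi> i = \<pi> t"
        using nl iin False unfolding near_linear_output_def by blast
      obtain s where s: "s \<in> sample_set k n" "s \<le> i" "i - s < k"
        using near_sample[OF k1, of i n] iin by auto
      have "\<bar>int t - int i\<bar> \<le> \<bar>int s - int i\<bar>" using t s by blast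
      then have tk: "\<bar>int t - int i\<bar> < int k" using s by linarith
      have tn: "1 \<le> t" "t \<le> n" using t kn k1 by (auto simp: sample_set_def)
      have ti: "t \<noteq> i" using t False by auto
      have dft: "d (f i) (f t) \<le> \<epsilon>"
      proof (cases "t < i")
        case True
        then have "d (f t) (f i) \<le> real (i - t) * \<delta>" using chain[OF sf tri tn(1)] iin by auto
        also have "\<dots> \<le> real k * \<delta>" using tk True dp by (intro mult_right_mono) auto
        finally show ?thesis using sym eps by metis
      next
        case False
        then have ti2: "i < t" using ti by simp
        then have "d (f i) (f t) \<le> real (t - i) * \<delta>" using chain[OF sf tri] iin tn by auto
        also have "\<dots> \<le> real k * \<delta>" using tk ti2 dp by (intro mult_right_mono) auto
        finally show ?thesis using eps by simp
      qed
      have "d (f i) (b (\<pi> i)) \<le> d (f i) (f t) + d (f t) (b (\<pi> t))" using tri t(3) by metis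
      also have "\<dots> \<le> \<epsilon> + 2 * \<epsilon>" using dft samp[OF t(1)] by simp
      finally show ?thesis by simp
    qed
  qed
  have npos: "real n > 0" using kn k1 by simp
  have "(\<Sum>i = 1..n. d (f i) (b (\<pi> i))) \<le> (\<Sum>i = 1..n. 3 * \<epsilon>)"
    by (rule sum_mono) (use each in auto)
  also have "\<dots> = real n * (3 * \<epsilon>)" by simp
  finally have "match_cost d f b n \<pi> \<le> 3 * \<epsilon>"
    using npos by (simp add: match_cost_def field_simps)
  then have A: "match_cost d f b n \<pi> \<le> 9 * \<epsilon>" using epos by simp
  have cn: "real (card (sample_set k n)) \<le> 3 * real n / real k" using card_sample[OF k1 kn] .
  have cm: "real (card (sample_set k m)) \<le> 3 * real m / real k" using card_sample[OF k1 km] .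
  have "real (near_linear_evals k n m) = real (card (sample_set k n)) * real (card (sample_set k m))"
    by (simp add: near_linear_evals_def)
  also have "\<dots> \<le> (3 * real n / real k) * (3 * real m / real k)"
    using cn cm by (intro mult_mono) auto
  also have "\<dots> = 9 * (real n * real m / (real k)^2)" by (simp add: power2_eq_square)
  finally have B: "real (near_linear_evals k n m) \<le> 9 * (real n * real m / (real k)^2)" .
  have "real n * real m / (real k)^2 = real n * real m * \<delta>^2 / \<epsilon>^2"
    using eps dp by (simp add: power_mult_distrib)
  with A B show ?thesis by simp
qed

theorem corollary3p3:
  "\<exists>c::real. \<forall>(d::'a \<Rightarrow> 'a \<Rightarrow> real) (f::nat \<Rightarrow> 'a) (b::nat \<Rightarrow> 'a) n m (k::nat) (\<delta>::real) (\<epsilon>::real) \<pi>.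
     (\<forall>x y. 0 \<le> d x y) \<longrightarrow> (\<forall>x y. d x y = d y x) \<longrightarrow>
     (\<forall>x y z. d x z \<le> d x y + d y z) \<longrightarrow>
     0 < \<delta> \<longrightarrow>
     (\<forall>i. 1 \<le> i \<and> i < n \<longrightarrow> d (f i) (f (i + 1)) \<le> \<delta>) \<longrightarrow>
     (\<forall>j. 1 \<le> j \<and> j < m \<longrightarrow> d (b j) (b (j + 1)) \<le> \<delta>) \<longrightarrow>
     (\<forall>i \<in> {1..n}. \<exists>j \<in> {1..m}. d (f i) (b j) \<le> \<epsilon>) \<longrightarrow>
     real k = \<epsilon> / \<delta> \<longrightarrow> 1 \<le> k \<longrightarrow> k \<le> min n m \<longrightarrow>
     near_linear_output k d f n b m \<pi> \<longrightarrow>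
       match_cost d f b n \<pi> \<le> c * \<epsilon> \<and>
       real (near_linear_evals k n m) \<le> c * (real n * real m / (real k)^2) \<and>
       real (near_linear_evals k n m) \<le> c * (real n * real m * \<delta>^2 / \<epsilon>^2)"
  apply (rule exI[of _ 9])
  apply (intro allI impI)
  apply (rule main; assumption)
  done

end
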